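(* In the setting described in the context, for $\gamma_1,\gamma_2\ge0$ with $\gamma_1+\gamma_2=\gamma$, there is a positive constant $C_1=C_1(d,\lambda,\gamma_1,\gamma_2)$ such that for all $n\in\mathbb{N}_\infty$, $s\in[0,1]$ and $y,z\in\mathbb{R}^d$, $$\|\nabla g^n(\cdot,z)\|_{\infty,\gamma_1}\le C_1(1\wedge|z|^{\gamma_2})\qquad\text{and}\qquad|g^n_s(y,z)|\le\tfrac32|z|.$$ Moreover, for each $t\in[0,1]$, $y,z\in\mathbb{R}^d$ and $j=0,1$, $\lim_{n\to\infty}\nabla^j_yg^n_t(y,z)=\nabla^j_yg^\infty_t(y,z)$.
   Context: Setting. Let $\gamma\in(0,1)$, $\lambda\ge0$, $\mathbb{N}_\infty:=\mathbb{N}\cup\{\infty\}$. For each $n\in\mathbb{N}_\infty$ let $u^n:[0,1]\times\mathbb{R}^d\to\mathbb{R}^d$ be $C^1$ in $x$ with (a) $\|\nabla u^n_t\|_\infty+\sup_{x\ne x'}|\nabla u^n_t(x)-\nabla u^n_t(x')|/|x-x'|^\gamma\le\frac12$ for all $n\in\mathbb{N}_\infty$, $t\in[0,1]$; (b) for every $R>0$ and $j=0,1$, $\lim_{n\to\infty}\sup_{t\in[0,1]}\sup_{|x|\le R}|\nabla^ju^n_t(x)-\nabla^ju^\infty_t(x)|=0$. (In the paper these are the solutions of $\partial_tu^n+(\mathscr{L}_{\nu,\eta}-\lambda)u^n+b^n\cdot\nabla u^n+b^n=0$, $u^n_1=0$, along a subsequence, with $\lambda$ chosen large enough for (a).) Let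 $\Phi^n_t(x):=x+u^n_t(x)$, a $C^1$-diffeomorphism of $\mathbb{R}^d$ with inverse $(\Phi^n_t)^{-1}$, and define $$g^n_s(y,z):=\Phi^n_s\big((\Phi^n_s)^{-1}(y)+z\big)-y.$$ Notation: $[h]_\beta=\sup_{x\ne y}|h(x)-h(y)|/|x-y|^\beta$, $\|h\|_\beta=\|h\|_\infty+[h]_\beta$, and $\|\nabla g^n(\cdot,z)\|_{\infty,\gamma_1}:=\sup_{s\in[0,1]}\|\nabla_yg^n_s(\cdot,z)\|_{\gamma_1}$. *)

theory Defs
  imports "HOL-Analysis.Analysis" "HOL-Library.Extended_Nat"
begin

definition grad :: "('a::euclidean_space \<Rightarrow> 'a) \<Rightarrow> 'a \<Rightarrow> 'a \<Rightarrow> 'a" where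
  "grad f x = frechet_derivative f (at x)"

definition sup_op :: "('a::euclidean_space \<Rightarrow> 'a \<Rightarrow> 'a) \<Rightarrow> ereal" where
  "sup_op D = (SUP x. ereal (onorm (D x)))"

definition hoelder_op :: "('a::euclidean_space \<Rightarrow> 'a \<Rightarrow> 'a) \<Rightarrow> real \<Rightarrow> ereal" where
  "hoelder_op D \<beta> = (SUP p \<in> {p. fst p \<noteq> snd p}.
      ereal (onorm (\<lambda>v. D (fst p) v - D (snd p) v) / (dist (fst p) (snd p) powr \<beta>)))"

definition hnorm_op :: "('a::euclidean_space \<Rightarrow> 'a \<Rightarrow> 'a) \<Rightarrow> real \<Rightarrow> ereal" where
  "hnorm_op D \<beta> = sup_op D + hoelder_op D \<beta>"

text \<open>Mathematical power |z|^a with the convention 0^0 = 1.\<close>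
definition mpow :: "real \<Rightarrow> real \<Rightarrow> real" where
  "mpow x a = (if x = 0 then (if a = 0 then 1 else 0) else x powr a)"

text \<open>Standing assumptions (a) and (b) of the setting; index n ranges over N \<union> {\<infinity>} = enat.\<close>
definition setting :: "real \<Rightarrow> (enat \<Rightarrow> real \<Rightarrow> 'a::euclidean_space \<Rightarrow> 'a) \<Rightarrow> bool" where
  "setting \<gamma> u \<longleftrightarrow>
     (\<forall>n t x. t \<in> {0..1} \<longrightarrow> u n t differentiable (at x)) \<and>
     (\<forall>n t. t \<in> {0..1} \<longrightarrow> hnorm_op (grad (u n t)) \<gamma> \<le> ereal (1/2)) \<and>
     (\<forall>R>0. (\<lambda>k::nat. SUP t\<in>{0..1}. SUP x\<in>cball 0 R.
                 ereal (norm (u (enat k) t x - u \<infinity> t x))) \<longlonglongrightarrow> 0) \<and>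
     (\<forall>R>0. (\<lambda>k::nat. SUP t\<in>{0..1}. SUP x\<in>cball 0 R.
                 ereal (onorm (\<lambda>v. grad (u (enat k) t) x v - grad (u \<infinity> t) x v))) \<longlonglongrightarrow> 0)"

definition Phi :: "(enat \<Rightarrow> real \<Rightarrow> 'a::euclidean_space \<Rightarrow> 'a) \<Rightarrow> enat \<Rightarrow> real \<Rightarrow> 'a \<Rightarrow> 'a" where
  "Phi u n t x = x + u n t x"

definition gfun :: "(enat \<Rightarrow> real \<Rightarrow> 'a::euclidean_space \<Rightarrow> 'a) \<Rightarrow> enat \<Rightarrow> real \<Rightarrow> 'a \<Rightarrow> 'a \<Rightarrow> 'a" where
  "gfun u n s y z = Phi u n s (inv (Phi u n s) y + z) - y"

end

theory Submission
  imports Defs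
begin


definition Minv :: "('a::euclidean_space \<Rightarrow> 'a) \<Rightarrow> 'a \<Rightarrow> 'a" where
  "Minv L = inv (\<lambda>v. v + L v)"

lemma Minv_props:
  fixes L :: "'a::euclidean_space \<Rightarrow> 'a"
  assumes bl: "bounded_linear L" and nL: "onorm L \<le> 1/2"
  shows "linear (Minv L)" "\<And>v. Minv L v + L (Minv L v) = v" "\<And>v. Minv L (v + L v) = v"
     "\<And>v. norm (Minv L v) \<le> 2 * norm v" "bounded_linear (Minv L)"
proof -
  let ?F = "\<lambda>v. v + L v"
  have blF: "bounded_linear ?F" by (rule bounded_linear_add[OF bounded_linear_ident bl])
  hence lin: "linear ?F" by (rule bounded_linear.linear)
  have lower: "norm v \<le> 2 * norm (?F v)" for v
  proof -
    have "norm (L v) \<le> onorm L * norm v" by (rule onorm[OF bl])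
    also have "\<dots> \<le> 1/2 * norm v" by (rule mult_right_mono[OF nL norm_ge_zero])
    finally have a: "norm (L v) \<le> 1/2 * norm v" .
    have "v = ?F v - L v" by simp
    hence "norm v \<le> norm (?F v) + norm (L v)" by (metis norm_triangle_ineq4)
    thus ?thesis using a by linarith
  qed
  have inj: "inj ?F"
  proof (rule injI)
    fix a b assume "a + L a = b + L b"
    hence "?F (a - b) = 0" using linear_diff[OF lin, of a b] by simp
    hence "norm (a - b) \<le> 0" using lower[of "a - b"] by simp
    thus "a = b" by simp
  qed
  obtain g where g: "linear g" "\<forall>x. g (?F x) = x" "\<forall>x. ?F (g x) = x"
    using linear_injective_isomorphism[OF lin inj] by blast
  have Mg: "Minv L v = g v" for v
  proof -
    have "Minv L v = inv ?F (?F (g v))" using g(3) by (simp add: Minv_def)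
    also have "\<dots> = g v" using inv_f_f[OF inj] by blast
    finally show ?thesis .
  qed
  have MG: "Minv L = g" by (rule ext) (rule Mg)
  show "linear (Minv L)" using g MG by simp
  show "Minv L v + L (Minv L v) = v" for v using g MG by simp
  show "Minv L (v + L v) = v" for v using g MG by simp
  show "norm (Minv L v) \<le> 2 * norm v" for v
    using lower[of "Minv L v"] g MG by simp
  show "bounded_linear (Minv L)" using g MG by (simp add: linear_conv_bounded_linear)
qed

lemma onorm_sub_le:
  assumes "bounded_linear P" "bounded_linear Q"
  shows "onorm (\<lambda>v. P v - Q v) \<le> onorm P + onorm Q"
proof (rule onorm_bound)
  show "0 \<le> onorm P + onorm Q" using onorm_pos_le[OF assms(1)] onorm_pos_le[OF assms(2)] by simp
  fix v
  have "norm (P v - Q v) \<le> norm (P v) + norm (Q v)" by (rule norm_triangle_ineq4)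
  also have "\<dots> \<le> onorm P * norm v + onorm Q * norm v" using onorm assms by (metis add_mono)
  finally show "norm (P v - Q v) \<le> (onorm P + onorm Q) * norm v" by (simp add: algebra_simps)
qed

lemma Minv_diff:
  fixes L1 L2 :: "'a::euclidean_space \<Rightarrow> 'a"
  assumes b1: "bounded_linear L1" and n1: "onorm L1 \<le> 1/2"
    and b2: "bounded_linear L2" and n2: "onorm L2 \<le> 1/2"
  shows "onorm (\<lambda>v. Minv L1 v - Minv L2 v) \<le> 4 * onorm (\<lambda>v. L1 v - L2 v)"
proof (rule onorm_bound)
  have bd: "bounded_linear (\<lambda>v. L1 v - L2 v)" by (rule bounded_linear_sub[OF b1 b2])
  show "0 \<le> 4 * onorm (\<lambda>v. L1 v - L2 v)" using onorm_pos_le[OF bd] by simp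
  fix v
  let ?a = "Minv L1 v" and ?w = "Minv L2 v"
  have e1: "?a + L1 ?a = v" "?w + L2 ?w = v" using Minv_props(2) b1 n1 b2 n2 by auto
  have l1: "L1 (?a - ?w) = L1 ?a - L1 ?w" by (rule linear_diff[OF bounded_linear.linear[OF b1]])
  have "(?a - ?w) + L1 (?a - ?w) = (?a + L1 ?a) - (?w + L1 ?w)" unfolding l1 by (simp add: algebra_simps)
  also have "\<dots> = (?w + L2 ?w) - (?w + L1 ?w)" using e1 by simp
  also have "\<dots> = L2 ?w - L1 ?w" by simp
  finally have "(?a - ?w) + L1 (?a - ?w) = L2 ?w - L1 ?w" .
  hence "?a - ?w = Minv L1 (L2 ?w - L1 ?w)" using Minv_props(3)[OF b1 n1] by metis
  hence "norm (?a - ?w) \<le> 2 * norm (L2 ?w - L1 ?w)" using Minv_props(4)[OF b1 n1] by metis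
  also have "norm (L2 ?w - L1 ?w) = norm (L1 ?w - L2 ?w)" by (rule norm_minus_commute)
  also have "\<dots> \<le> onorm (\<lambda>v. L1 v - L2 v) * norm ?w" using onorm[OF bd] by simp
  also have "\<dots> \<le> onorm (\<lambda>v. L1 v - L2 v) * (2 * norm v)"
    using Minv_props(4)[OF b2 n2] onorm_pos_le[OF bd] by (simp add: mult_left_mono)
  finally show "norm (?a - ?w) \<le> 4 * onorm (\<lambda>v. L1 v - L2 v) * norm v" by (simp add: algebra_simps)
qed



definition PH :: "('a::euclidean_space \<Rightarrow> 'a) \<Rightarrow> 'a \<Rightarrow> 'a" where "PH f x = x + f x"
definition PSI :: "('a::euclidean_space \<Rightarrow> 'a) \<Rightarrow> 'a \<Rightarrow> 'a" where "PSI f = inv (PH f)"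
definition CD :: "('a::euclidean_space \<Rightarrow> 'a) \<Rightarrow> ('a \<Rightarrow> 'a \<Rightarrow> 'a) \<Rightarrow> bool" where
  "CD f D \<longleftrightarrow> (\<forall>x. (f has_derivative D x) (at x)) \<and> (\<forall>x. onorm (D x) \<le> 1/2)"
definition GD :: "('a::euclidean_space \<Rightarrow> 'a) \<Rightarrow> ('a \<Rightarrow> 'a \<Rightarrow> 'a) \<Rightarrow> 'a \<Rightarrow> 'a \<Rightarrow> 'a \<Rightarrow> 'a" where
  "GD f D z y = (\<lambda>v. D (PSI f y + z) (Minv (D (PSI f y)) v) - D (PSI f y) (Minv (D (PSI f y)) v))"

lemma CD_der: "CD f D \<Longrightarrow> (f has_derivative D x) (at x)" by (simp add: CD_def)
lemma CD_bnd: "CD f D \<Longrightarrow> onorm (D x) \<le> 1/2" by (simp add: CD_def)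
lemma CD_bl: "CD f D \<Longrightarrow> bounded_linear (D x)" using CD_der has_derivative_bounded_linear by blast

lemma CD_lip:
  assumes "CD f D" shows "norm (f x - f y) \<le> 1/2 * norm (x - y)"
proof -
  have "norm (f x - f y) \<le> 1/2 * norm (x - y)"
    by (rule differentiable_bound[of UNIV f D "1/2" x y, OF convex_UNIV _ CD_bnd[OF assms]])
       (auto intro: has_derivative_at_withinI CD_der[OF assms])
  thus ?thesis .
qed

lemma PH_lower:
  assumes "CD f D" shows "norm (x - y) \<le> 2 * norm (PH f x - PH f y)"
proof -
  have "x - y = (PH f x - PH f y) - (f x - f y)" by (simp add: PH_def algebra_simps)
  hence "norm (x - y) \<le> norm (PH f x - PH f y) + norm (f x - f y)" by (metis norm_triangle_ineq4)
  thus ?thesis using CD_lip[OF assms, of x y] by linarith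
qed

lemma PH_surj:
  assumes "CD f D" shows "\<exists>x. PH f x = y"
proof -
  have "\<exists>!x. (\<lambda>x. y - f x) x = x"
  proof (rule banach_fix_type[of "1/2"])
    show "\<forall>x x'. dist ((\<lambda>x. y - f x) x) ((\<lambda>x. y - f x) x') \<le> 1/2 * dist x x'"
    proof (intro allI)
      fix x x'
      have "dist (y - f x) (y - f x') = norm (f x - f x')" by (simp add: dist_norm norm_minus_commute)
      also have "\<dots> \<le> 1/2 * norm (x - x')" by (rule CD_lip[OF assms])
      finally show "dist ((\<lambda>x. y - f x) x) ((\<lambda>x. y - f x) x') \<le> 1/2 * dist x x'" by (simp add: dist_norm)
    qed
  qed auto
  then obtain x where "y - f x = x" by blast
  hence "PH f x = y" by (simp add: PH_def algebra_simps)
  thus ?thesis by blast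
qed

lemma PH_inj: assumes "CD f D" shows "inj (PH f)"
proof (rule injI)
  fix x y assume "PH f x = PH f y"
  thus "x = y" using PH_lower[OF assms, of x y] by simp
qed

lemma PH_PSI: assumes "CD f D" shows "PH f (PSI f y) = y"
proof -
  have "surj (PH f)" using PH_surj[OF assms] by (metis surjI)
  thus ?thesis unfolding PSI_def by (simp add: surj_f_inv_f)
qed

lemma PSI_PH: assumes "CD f D" shows "PSI f (PH f x) = x"
  unfolding PSI_def using PH_inj[OF assms] by simp

lemma PSI_lip: assumes "CD f D" shows "norm (PSI f y - PSI f y') \<le> 2 * norm (y - y')"
  using PH_lower[OF assms, of "PSI f y" "PSI f y'"] PH_PSI[OF assms] by simp

lemma PSI_inj: assumes "CD f D" "y \<noteq> y'" shows "PSI f y \<noteq> PSI f y'"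
  using PH_PSI[OF assms(1)] assms(2) by metis

lemma PH_der: assumes "CD f D" shows "(PH f has_derivative (\<lambda>v. v + D x v)) (at x)"
proof -
  have e: "PH f = (\<lambda>x. x + f x)" by (rule ext) (simp add: PH_def)
  show ?thesis unfolding e by (rule has_derivative_add[OF has_derivative_ident CD_der[OF assms]])
qed

lemma PSI_cont: assumes "CD f D" shows "continuous (at y) (PSI f)"
proof -
  have "2-lipschitz_on UNIV (PSI f)"
    by (rule lipschitz_onI) (auto simp: dist_norm intro: PSI_lip[OF assms])
  hence "continuous_on UNIV (PSI f)" by (rule lipschitz_on_continuous_on)
  thus ?thesis by (simp add: continuous_on_eq_continuous_at)
qed

lemma PSI_der: assumes "CD f D" shows "(PSI f has_derivative Minv (D (PSI f y))) (at y)"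
proof (rule has_derivative_inverse_basic[where f="PH f" and T=UNIV])
  show "(PH f has_derivative (\<lambda>v. v + D (PSI f y) v)) (at (PSI f y))" by (rule PH_der[OF assms])
  show "bounded_linear (Minv (D (PSI f y)))" by (rule Minv_props(5)[OF CD_bl[OF assms] CD_bnd[OF assms]])
  show "Minv (D (PSI f y)) \<circ> (\<lambda>v. v + D (PSI f y) v) = id"
    by (rule ext) (simp add: Minv_props(3)[OF CD_bl[OF assms] CD_bnd[OF assms]])
  show "continuous (at y) (PSI f)" by (rule PSI_cont[OF assms])
qed (auto simp: PH_PSI[OF assms])

lemma g_der: assumes "CD f D"
  shows "((\<lambda>y. PH f (PSI f y + z) - y) has_derivative GD f D z y) (at y)"
proof -
  let ?M = "Minv (D (PSI f y))"
  have d1: "((\<lambda>y. PSI f y + z) has_derivative ?M) (at y)"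
    by (rule has_derivative_add_const[OF PSI_der[OF assms]])
  have d2: "(PH f has_derivative (\<lambda>v. v + D (PSI f y + z) v)) (at (PSI f y + z))" by (rule PH_der[OF assms])
  have d3: "((PH f \<circ> (\<lambda>y. PSI f y + z)) has_derivative ((\<lambda>v. v + D (PSI f y + z) v) \<circ> ?M)) (at y)"
    by (rule diff_chain_at[OF d1 d2])
  have d4: "((\<lambda>y. (PH f \<circ> (\<lambda>y. PSI f y + z)) y - y) has_derivative (\<lambda>v. ((\<lambda>v. v + D (PSI f y + z) v) \<circ> ?M) v - v)) (at y)"
    by (rule has_derivative_diff[OF d3 has_derivative_ident])
  have eq: "(\<lambda>v. ((\<lambda>v. v + D (PSI f y + z) v) \<circ> ?M) v - v) = GD f D z y"
  proof (rule ext)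
    fix v
    have "?M v + D (PSI f y) (?M v) = v" by (rule Minv_props(2)[OF CD_bl[OF assms] CD_bnd[OF assms]])
    then show "((\<lambda>v. v + D (PSI f y + z) v) \<circ> ?M) v - v = GD f D z y v"
      unfolding GD_def o_def by (metis add_diff_cancel_left diff_diff_eq2)
  qed
  show ?thesis using d4 unfolding eq by (simp add: o_def)
qed



definition HD :: "('a::euclidean_space \<Rightarrow> 'a \<Rightarrow> 'a) \<Rightarrow> real \<Rightarrow> bool" where
  "HD D \<gamma> \<longleftrightarrow> (\<forall>x x'. onorm (\<lambda>v. D x v - D x' v) \<le> 1/2 * dist x x' powr \<gamma>)"



lemma Gsup:
  assumes "bounded_linear P" "bounded_linear Q" "onorm Q \<le> 1/2"
  shows "onorm (\<lambda>v. P (Minv Q v) - Q (Minv Q v)) \<le> 2 * onorm (\<lambda>v. P v - Q v)"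
proof (rule onorm_bound)
  have bd: "bounded_linear (\<lambda>v. P v - Q v)" by (rule bounded_linear_sub[OF assms(1,2)])
  show "0 \<le> 2 * onorm (\<lambda>v. P v - Q v)" using onorm_pos_le[OF bd] by simp
  fix v
  have "norm (P (Minv Q v) - Q (Minv Q v)) \<le> onorm (\<lambda>v. P v - Q v) * norm (Minv Q v)"
    using onorm[OF bd] by simp
  also have "\<dots> \<le> onorm (\<lambda>v. P v - Q v) * (2 * norm v)"
    using Minv_props(4)[OF assms(2,3)] onorm_pos_le[OF bd] by (simp add: mult_left_mono)
  finally show "norm (P (Minv Q v) - Q (Minv Q v)) \<le> 2 * onorm (\<lambda>v. P v - Q v) * norm v" by simp
qed

lemma Gdiff:
  assumes bl: "bounded_linear P1" "bounded_linear Q1" "bounded_linear P2" "bounded_linear Q2"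
    and n: "onorm Q1 \<le> 1/2" "onorm Q2 \<le> 1/2"
  shows "onorm (\<lambda>v. (P1 (Minv Q1 v) - Q1 (Minv Q1 v)) - (P2 (Minv Q2 v) - Q2 (Minv Q2 v)))
     \<le> 2 * onorm (\<lambda>v. (P1 v - Q1 v) - (P2 v - Q2 v)) + 4 * onorm (\<lambda>v. P2 v - Q2 v) * onorm (\<lambda>v. Q1 v - Q2 v)"
proof (rule onorm_bound)
  have bA: "bounded_linear (\<lambda>v. (P1 v - Q1 v) - (P2 v - Q2 v))"
    by (intro bounded_linear_sub bl)
  have bB: "bounded_linear (\<lambda>v. P2 v - Q2 v)" by (intro bounded_linear_sub bl)
  have bQ: "bounded_linear (\<lambda>v. Q1 v - Q2 v)" by (intro bounded_linear_sub bl)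
  have bM: "bounded_linear (\<lambda>v. Minv Q1 v - Minv Q2 v)"
    by (intro bounded_linear_sub Minv_props(5) bl n)
  have p1: "0 \<le> onorm (\<lambda>v. (P1 v - Q1 v) - (P2 v - Q2 v))" by (rule onorm_pos_le[OF bA])
  have p2: "0 \<le> onorm (\<lambda>v. P2 v - Q2 v)" by (rule onorm_pos_le[OF bB])
  have p3: "0 \<le> onorm (\<lambda>v. Q1 v - Q2 v)" by (rule onorm_pos_le[OF bQ])
  show "0 \<le> 2 * onorm (\<lambda>v. (P1 v - Q1 v) - (P2 v - Q2 v)) + 4 * onorm (\<lambda>v. P2 v - Q2 v) * onorm (\<lambda>v. Q1 v - Q2 v)"
    using p1 p2 p3 by simp
  fix v
  let ?a = "Minv Q1 v" and ?b = "Minv Q2 v"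
  let ?nA = "onorm (\<lambda>v. (P1 v - Q1 v) - (P2 v - Q2 v))" and ?nB = "onorm (\<lambda>v. P2 v - Q2 v)"
    and ?nQ = "onorm (\<lambda>v. Q1 v - Q2 v)"
  have lP: "P2 (?a - ?b) = P2 ?a - P2 ?b" by (rule linear_diff[OF bounded_linear.linear[OF bl(3)]])
  have lQ: "Q2 (?a - ?b) = Q2 ?a - Q2 ?b" by (rule linear_diff[OF bounded_linear.linear[OF bl(4)]])
  have split: "(P1 ?a - Q1 ?a) - (P2 ?b - Q2 ?b) = ((P1 ?a - Q1 ?a) - (P2 ?a - Q2 ?a)) + (P2 (?a - ?b) - Q2 (?a - ?b))"
    unfolding lP lQ by (simp add: algebra_simps)
  have t1: "norm ((P1 ?a - Q1 ?a) - (P2 ?a - Q2 ?a)) \<le> ?nA * (2 * norm v)"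
  proof -
    have "norm ((P1 ?a - Q1 ?a) - (P2 ?a - Q2 ?a)) \<le> ?nA * norm ?a" using onorm[OF bA] by simp
    also have "\<dots> \<le> ?nA * (2 * norm v)" using Minv_props(4)[OF bl(2) n(1)] p1 by (simp add: mult_left_mono)
    finally show ?thesis .
  qed
  have t2: "norm (P2 (?a - ?b) - Q2 (?a - ?b)) \<le> ?nB * (4 * ?nQ * norm v)"
  proof -
    have "norm (P2 (?a - ?b) - Q2 (?a - ?b)) \<le> ?nB * norm (?a - ?b)" using onorm[OF bB] by simp
    also have "norm (?a - ?b) \<le> onorm (\<lambda>v. Minv Q1 v - Minv Q2 v) * norm v" using onorm[OF bM] by simp
    also have "\<dots> \<le> 4 * ?nQ * norm v"
      using Minv_diff[OF bl(2) n(1) bl(4) n(2)] by (simp add: mult_right_mono)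
    finally show ?thesis using p2 by (simp add: mult_left_mono)
  qed
  have "norm ((P1 ?a - Q1 ?a) - (P2 ?b - Q2 ?b)) \<le> ?nA * (2 * norm v) + ?nB * (4 * ?nQ * norm v)"
    unfolding split using norm_triangle_ineq[of "(P1 ?a - Q1 ?a) - (P2 ?a - Q2 ?a)" "P2 (?a - ?b) - Q2 (?a - ?b)"] t1 t2
    by linarith
  thus "norm ((P1 ?a - Q1 ?a) - (P2 ?b - Q2 ?b)) \<le> (2 * ?nA + 4 * ?nB * ?nQ) * norm v"
    by (simp add: algebra_simps)
qed

locale est =
  fixes f :: "'a::euclidean_space \<Rightarrow> 'a" and D :: "'a \<Rightarrow> 'a \<Rightarrow> 'a" and \<gamma> \<gamma>1 \<gamma>2 :: real and z :: 'a
  assumes cd: "CD f D" and hd: "HD D \<gamma>" and g0: "0 < \<gamma>" "\<gamma> < 1"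
    and g12: "0 \<le> \<gamma>1" "0 \<le> \<gamma>2" "\<gamma>1 + \<gamma>2 = \<gamma>"
begin

abbreviation "m \<equiv> min 1 (mpow (norm z) \<gamma>2)"

lemma bl: "bounded_linear (D x)" by (rule CD_bl[OF cd])
lemma bnd: "onorm (D x) \<le> 1/2" by (rule CD_bnd[OF cd])
lemma hol: "onorm (\<lambda>v. D x v - D x' v) \<le> 1/2 * dist x x' powr \<gamma>" using hd by (simp add: HD_def)

lemma m_nonneg: "0 \<le> m" by (simp add: mpow_def)
lemma m_big: "1 \<le> norm z \<Longrightarrow> m = 1"
  using ge_one_powr_ge_zero[of "norm z" \<gamma>2] g12 by (auto simp: mpow_def)
lemma m_small: "0 < norm z \<Longrightarrow> norm z < 1 \<Longrightarrow> m = norm z powr \<gamma>2 \<and> norm z powr \<gamma> \<le> m"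
proof -
  assume a: "0 < norm z" "norm z < 1"
  have "norm z powr \<gamma>2 \<le> 1" using a g12 by (simp add: powr_le1)
  hence e: "m = norm z powr \<gamma>2" using a by (simp add: mpow_def)
  have "norm z powr \<gamma> \<le> norm z powr \<gamma>2" by (rule powr_mono') (use a g12 in auto)
  thus ?thesis using e by simp
qed

lemma nsub: "onorm (\<lambda>v. D x v - D x' v) \<le> 1"
  using onorm_sub_le[OF bl bl, of x x'] bnd[of x] bnd[of x'] by linarith

lemma A1: "onorm (\<lambda>v. D (x + z) v - D x v) \<le> m"
proof -
  have h: "onorm (\<lambda>v. D (x + z) v - D x v) \<le> 1/2 * norm z powr \<gamma>"
    using hol[of "x + z" x] by (simp add: dist_norm)
  have n1: "onorm (\<lambda>v. D (x + z) v - D x v) \<le> 1" by (rule nsub)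
  consider "norm z = 0" | "1 \<le> norm z" | "0 < norm z \<and> norm z < 1" by fastforce
  thus ?thesis
  proof cases
    case 1 thus ?thesis using h m_nonneg by simp
  next
    case 2 thus ?thesis using n1 m_big by simp
  next
    case 3
    hence "norm z powr \<gamma> \<le> m" using m_small by blast
    thus ?thesis using h powr_ge_zero[of "norm z" \<gamma>] by linarith
  qed
qed

lemma Dd: assumes "x \<noteq> x'" shows "onorm (\<lambda>v. D x v - D x' v) \<le> dist x x' powr \<gamma>1"
proof -
  have dp: "0 < dist x x'" using assms by simp
  show ?thesis
  proof (cases "dist x x' \<le> 1")
    case True
    have "dist x x' powr \<gamma> \<le> dist x x' powr \<gamma>1" by (rule powr_mono') (use True g12 in auto)
    thus ?thesis using hol[of x x'] powr_ge_zero[of "dist x x'" \<gamma>] by linarith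
  next
    case False
    have "1 \<le> dist x x' powr \<gamma>1" using False g12 by (intro ge_one_powr_ge_zero) auto
    thus ?thesis using nsub[of x x'] by linarith
  qed
qed

lemma A2: assumes "x \<noteq> x'"
  shows "onorm (\<lambda>v. (D (x + z) v - D x v) - (D (x' + z) v - D x' v)) \<le> 2 * m * dist x x' powr \<gamma>1"
proof -
  let ?b = "onorm (\<lambda>v. (D (x + z) v - D x v) - (D (x' + z) v - D x' v))"
  let ?d = "dist x x'"
  have dp: "0 < ?d" using assms by simp
  have blA: "bounded_linear (\<lambda>v. D (x + z) v - D x v)" for x by (intro bounded_linear_sub bl)
  have b1: "?b \<le> ?d powr \<gamma>"
  proof -
    have "?b = onorm (\<lambda>v. (D (x + z) v - D (x' + z) v) - (D x v - D x' v))"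
      by (rule arg_cong[where f=onorm]) (rule ext, simp add: algebra_simps)
    also have "\<dots> \<le> onorm (\<lambda>v. D (x + z) v - D (x' + z) v) + onorm (\<lambda>v. D x v - D x' v)"
      by (intro onorm_sub_le bounded_linear_sub bl)
    also have "\<dots> \<le> 1/2 * dist (x + z) (x' + z) powr \<gamma> + 1/2 * ?d powr \<gamma>"
      by (intro add_mono hol)
    also have "dist (x + z) (x' + z) = ?d" by (simp add: dist_norm)
    finally show ?thesis by simp
  qed
  have b2: "?b \<le> 2 * min 1 (1/2 * norm z powr \<gamma>)"
  proof -
    have "?b \<le> onorm (\<lambda>v. D (x + z) v - D x v) + onorm (\<lambda>v. D (x' + z) v - D x' v)"
      by (intro onorm_sub_le blA)
    moreover have hy: "onorm (\<lambda>v. D (y + z) v - D y v) \<le> min 1 (1/2 * norm z powr \<gamma>)" for y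
      using hol[of "y + z" y] nsub[of "y + z" y] by (simp add: dist_norm)
    ultimately show ?thesis using hy[of x] hy[of x'] by linarith
  qed
  consider "norm z = 0" | "1 \<le> norm z" | "0 < norm z \<and> norm z < 1" by fastforce
  thus ?thesis
  proof cases
    case 1 
    have "0 \<le> 2 * m * ?d powr \<gamma>1" using m_nonneg by simp
    thus ?thesis using b2 1 by simp
  next
    case 2
    hence m1: "m = 1" by (rule m_big)
    show ?thesis
    proof (cases "?d \<le> 1")
      case True
      have "?d powr \<gamma> \<le> ?d powr \<gamma>1" by (rule powr_mono') (use True g12 in auto)
      thus ?thesis using b1 m1 powr_ge_zero[of ?d \<gamma>1] by linarith
    next
      case False
      have "1 \<le> ?d powr \<gamma>1" using False g12 by (intro ge_one_powr_ge_zero) auto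
      thus ?thesis using b2 m1 by linarith
    qed
  next
    case 3
    hence mz: "m = norm z powr \<gamma>2" using m_small by blast
    define r where "r = min ?d (norm z)"
    have rp: "0 < r" using 3 dp by (simp add: r_def)
    have "?b \<le> r powr \<gamma>"
    proof (cases "?d \<le> norm z")
      case True thus ?thesis using b1 by (simp add: r_def)
    next
      case False thus ?thesis using b2 by (simp add: r_def)
    qed
    also have "r powr \<gamma> = r powr \<gamma>1 * r powr \<gamma>2" using g12 by (simp add: powr_add[symmetric])
    also have "\<dots> \<le> ?d powr \<gamma>1 * norm z powr \<gamma>2"
      by (intro mult_mono powr_mono2) (use rp g12 in \<open>auto simp: r_def\<close>)
    finally have f: "?b \<le> ?d powr \<gamma>1 * norm z powr \<gamma>2" .
    have "0 \<le> ?d powr \<gamma>1 * norm z powr \<gamma>2" by simp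
    moreover have "2 * m * ?d powr \<gamma>1 = 2 * (?d powr \<gamma>1 * norm z powr \<gamma>2)" using mz by simp
    ultimately show ?thesis using f by linarith
  qed
qed

lemma E1: "onorm (GD f D z y) \<le> 2 * m"
proof -
  have "onorm (GD f D z y) \<le> 2 * onorm (\<lambda>v. D (PSI f y + z) v - D (PSI f y) v)"
    unfolding GD_def by (intro Gsup bl bnd)
  also have "\<dots> \<le> 2 * m" using A1 by simp
  finally show ?thesis .
qed

lemma E2: assumes "y \<noteq> y'"
  shows "onorm (\<lambda>v. GD f D z y v - GD f D z y' v) \<le> 16 * m * dist y y' powr \<gamma>1"
proof -
  let ?x = "PSI f y" and ?x' = "PSI f y'"
  have ne: "?x \<noteq> ?x'" by (rule PSI_inj[OF cd assms])
  have dle: "dist ?x ?x' \<le> 2 * dist y y'" using PSI_lip[OF cd] by (simp add: dist_norm)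
  have dp: "0 < dist ?x ?x'" using ne by simp
  have pw: "dist ?x ?x' powr \<gamma>1 \<le> 2 * dist y y' powr \<gamma>1"
  proof -
    have "dist ?x ?x' powr \<gamma>1 \<le> (2 * dist y y') powr \<gamma>1" by (rule powr_mono2) (use dle g12 in auto)
    also have "\<dots> = 2 powr \<gamma>1 * dist y y' powr \<gamma>1" by (simp add: powr_mult)
    also have "2 powr \<gamma>1 \<le> 2" using powr_mono[of \<gamma>1 1 2] g0 g12 by simp
    hence "2 powr \<gamma>1 * dist y y' powr \<gamma>1 \<le> 2 * dist y y' powr \<gamma>1" by (simp add: mult_right_mono)
    finally show ?thesis .
  qed
  have "onorm (\<lambda>v. GD f D z y v - GD f D z y' v) \<le>
     2 * onorm (\<lambda>v. (D (?x + z) v - D ?x v) - (D (?x' + z) v - D ?x' v))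
       + 4 * onorm (\<lambda>v. D (?x' + z) v - D ?x' v) * onorm (\<lambda>v. D ?x v - D ?x' v)"
    unfolding GD_def by (intro Gdiff bl bnd)
  also have "\<dots> \<le> 2 * (2 * m * dist ?x ?x' powr \<gamma>1) + 4 * m * dist ?x ?x' powr \<gamma>1"
  proof -
    have "onorm (\<lambda>v. D (?x' + z) v - D ?x' v) * onorm (\<lambda>v. D ?x v - D ?x' v) \<le> m * dist ?x ?x' powr \<gamma>1"
      by (intro mult_mono A1 Dd ne m_nonneg onorm_pos_le bounded_linear_sub bl)
    thus ?thesis using A2[OF ne] by linarith
  qed
  also have "\<dots> = 8 * m * dist ?x ?x' powr \<gamma>1" by simp
  also have "\<dots> \<le> 8 * m * (2 * dist y y' powr \<gamma>1)" by (rule mult_left_mono[OF pw]) (use m_nonneg in simp)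
  finally show ?thesis by simp
qed

end


lemma conv_aux:
  fixes fk :: "nat \<Rightarrow> 'a::euclidean_space \<Rightarrow> 'a" and Dk :: "nat \<Rightarrow> 'a \<Rightarrow> 'a \<Rightarrow> 'a"
    and f :: "'a \<Rightarrow> 'a" and D :: "'a \<Rightarrow> 'a \<Rightarrow> 'a"
  assumes cdk: "\<And>k. CD (fk k) (Dk k)" and cd: "CD f D" and hd: "HD D \<gamma>" and g: "0 < \<gamma>"
    and pf: "\<And>x. (\<lambda>k. fk k x) \<longlonglongrightarrow> f x"
    and uD: "\<And>R e. 0 < R \<Longrightarrow> 0 < e \<Longrightarrow>
       eventually (\<lambda>k. \<forall>x\<in>cball 0 R. onorm (\<lambda>v. Dk k x v - D x v) < e) sequentially"
  shows "(\<lambda>k. PH (fk k) (PSI (fk k) y + z) - y) \<longlonglongrightarrow> PH f (PSI f y + z) - y"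
    and "(\<lambda>k. onorm (\<lambda>v. GD (fk k) (Dk k) z y v - GD f D z y v)) \<longlonglongrightarrow> 0"
proof -
  define xk where "xk k = PSI (fk k) y" for k
  define x where "x = PSI f y"
  have bl: "bounded_linear (D p)" for p by (rule CD_bl[OF cd])
  have blk: "bounded_linear (Dk k p)" for k p by (rule CD_bl[OF cdk])
  have hol: "onorm (\<lambda>v. D p v - D p' v) \<le> 1/2 * dist p p' powr \<gamma>" for p p' using hd by (simp add: HD_def)
  have X0: "(\<lambda>k. xk k - x) \<longlonglongrightarrow> 0"
  proof (rule tendsto_0_le[where K=2])
    show "(\<lambda>k. fk k x - f x) \<longlonglongrightarrow> 0" by (rule LIM_zero[OF pf])
    show "\<forall>\<^sub>F k in sequentially. norm (xk k - x) \<le> norm (fk k x - f x) * 2"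
    proof (rule always_eventually, rule allI)
      fix k
      have "norm (xk k - x) \<le> 2 * norm (PH (fk k) (xk k) - PH (fk k) x)" by (rule PH_lower[OF cdk])
      also have "PH (fk k) (xk k) = y" unfolding xk_def by (rule PH_PSI[OF cdk])
      also have "y = PH f x" unfolding x_def by (rule PH_PSI[OF cd, symmetric])
      also have "PH f x - PH (fk k) x = - (fk k x - f x)" by (simp add: PH_def)
      finally show "norm (xk k - x) \<le> norm (fk k x - f x) * 2" by (simp add: norm_minus_commute)
    qed
  qed
  have X: "xk \<longlonglongrightarrow> x" by (rule LIM_zero_cancel[OF X0])
  have nX: "(\<lambda>k. norm (xk k - x)) \<longlonglongrightarrow> 0" by (rule tendsto_norm_zero[OF X0])
  have F: "(\<lambda>k. fk k (xk k + z)) \<longlonglongrightarrow> f (x + z)"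
  proof (rule LIM_zero_cancel, rule tendsto_norm_zero_cancel, rule tendsto_sandwich)
    show "\<forall>\<^sub>F k in sequentially. 0 \<le> norm (fk k (xk k + z) - f (x + z))" by simp
    show "\<forall>\<^sub>F k in sequentially. norm (fk k (xk k + z) - f (x + z)) \<le> 1/2 * norm (xk k - x) + norm (fk k (x + z) - f (x + z))"
    proof (rule always_eventually, rule allI)
      fix k
      have "norm (fk k (xk k + z) - f (x + z)) \<le> norm (fk k (xk k + z) - fk k (x + z)) + norm (fk k (x + z) - f (x + z))"
        by (metis diff_add_cancel norm_triangle_ineq add_diff_eq)
      moreover have "norm (fk k (xk k + z) - fk k (x + z)) \<le> 1/2 * norm ((xk k + z) - (x + z))" by (rule CD_lip[OF cdk])
      ultimately show "norm (fk k (xk k + z) - f (x + z)) \<le> 1/2 * norm (xk k - x) + norm (fk k (x + z) - f (x + z))"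
        by simp
    qed
    show "(\<lambda>k. 0::real) \<longlonglongrightarrow> 0" by simp
    have T: "(\<lambda>k. norm (fk k (x + z) - f (x + z))) \<longlonglongrightarrow> 0" by (rule tendsto_norm_zero[OF LIM_zero[OF pf]])
    show "(\<lambda>k. 1/2 * norm (xk k - x) + norm (fk k (x + z) - f (x + z))) \<longlonglongrightarrow> 0"
      by (rule tendsto_add_zero[OF tendsto_mult_right_zero[OF nX] T])
  qed
  have "(\<lambda>k. (xk k + z) + fk k (xk k + z) - y) \<longlonglongrightarrow> (x + z) + f (x + z) - y"
    by (intro tendsto_intros X F)
  thus "(\<lambda>k. PH (fk k) (PSI (fk k) y + z) - y) \<longlonglongrightarrow> PH f (PSI f y + z) - y"
    by (simp add: PH_def xk_def x_def)
  have DP: "(\<lambda>k. onorm (\<lambda>v. Dk k (pk k) v - D p v)) \<longlonglongrightarrow> 0" if P: "pk \<longlonglongrightarrow> p" for pk p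
  proof (rule tendsto_sandwich)
    show "\<forall>\<^sub>F k in sequentially. 0 \<le> onorm (\<lambda>v. Dk k (pk k) v - D p v)"
      by (intro always_eventually allI onorm_pos_le bounded_linear_sub blk bl)
    show "(\<lambda>k. 0::real) \<longlonglongrightarrow> 0" by simp
    define R where "R = norm p + 1"
    have Rp: "0 < R" by (simp add: R_def add_nonneg_pos)
    define ck where "ck k = onorm (\<lambda>v. Dk k (pk k) v - D (pk k) v)" for k
    show "\<forall>\<^sub>F k in sequentially. onorm (\<lambda>v. Dk k (pk k) v - D p v) \<le> ck k + 1/2 * dist (pk k) p powr \<gamma>"
    proof (rule always_eventually, rule allI)
      fix k
      have "onorm (\<lambda>v. Dk k (pk k) v - D p v) = onorm (\<lambda>v. (Dk k (pk k) v - D (pk k) v) + (D (pk k) v - D p v))"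
        by simp
      also have "\<dots> \<le> ck k + onorm (\<lambda>v. D (pk k) v - D p v)"
        unfolding ck_def by (intro onorm_triangle bounded_linear_sub blk bl)
      also have "\<dots> \<le> ck k + 1/2 * dist (pk k) p powr \<gamma>" using hol by simp
      finally show "onorm (\<lambda>v. Dk k (pk k) v - D p v) \<le> ck k + 1/2 * dist (pk k) p powr \<gamma>" .
    qed
    have C: "ck \<longlonglongrightarrow> 0"
    proof (unfold tendsto_iff, intro allI impI)
      fix e :: real assume e: "0 < e"
      have ev1: "\<forall>\<^sub>F k in sequentially. dist (pk k) p < 1" using P by (simp add: tendsto_iff)
      have ev2: "\<forall>\<^sub>F k in sequentially. \<forall>x\<in>cball 0 R. onorm (\<lambda>v. Dk k x v - D x v) < e" by (rule uD[OF Rp e])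
      show "\<forall>\<^sub>F k in sequentially. dist (ck k) 0 < e"
      proof (rule eventually_mono[OF eventually_conj[OF ev1 ev2]])
        fix k assume a: "dist (pk k) p < 1 \<and> (\<forall>x\<in>cball 0 R. onorm (\<lambda>v. Dk k x v - D x v) < e)"
        have "norm (pk k) \<le> norm p + dist (pk k) p" by (metis dist_norm norm_triangle_sub add.commute)
        hence "pk k \<in> cball 0 R" using a by (simp add: R_def)
        hence "ck k < e" using a by (simp add: ck_def)
        moreover have "0 \<le> ck k" unfolding ck_def by (intro onorm_pos_le bounded_linear_sub blk bl)
        ultimately show "dist (ck k) 0 < e" by simp
      qed
    qed
    have "(\<lambda>k. dist (pk k) p powr \<gamma>) \<longlonglongrightarrow> 0"
    proof (rule tendsto_zero_powrI)
      show "(\<lambda>k. dist (pk k) p) \<longlonglongrightarrow> 0" using tendsto_dist[OF P tendsto_const, of p] by simp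
      show "(\<lambda>k. \<gamma>) \<longlonglongrightarrow> \<gamma>" by (rule tendsto_const)
      show "\<forall>\<^sub>F k in sequentially. 0 \<le> dist (pk k) p" by simp
      show "0 < \<gamma>" by (rule g)
    qed
    thus "(\<lambda>k. ck k + 1/2 * dist (pk k) p powr \<gamma>) \<longlonglongrightarrow> 0"
      by (rule tendsto_add_zero[OF C tendsto_mult_right_zero])
  qed
  have a0: "(\<lambda>k. onorm (\<lambda>v. Dk k (xk k + z) v - D (x + z) v)) \<longlonglongrightarrow> 0"
    by (rule DP) (intro tendsto_intros X)
  have b0: "(\<lambda>k. onorm (\<lambda>v. Dk k (xk k) v - D x v)) \<longlonglongrightarrow> 0" by (rule DP[OF X])
  let ?c = "onorm (\<lambda>v. D (x + z) v - D x v)"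
  show "(\<lambda>k. onorm (\<lambda>v. GD (fk k) (Dk k) z y v - GD f D z y v)) \<longlonglongrightarrow> 0"
  proof (rule tendsto_sandwich)
    show "\<forall>\<^sub>F k in sequentially. 0 \<le> onorm (\<lambda>v. GD (fk k) (Dk k) z y v - GD f D z y v)"
    proof (intro always_eventually allI onorm_pos_le bounded_linear_sub)
      fix k
      show "bounded_linear (GD (fk k) (Dk k) z y)" unfolding GD_def
        by (intro bounded_linear_sub bounded_linear_compose[OF blk] Minv_props(5) blk CD_bnd[OF cdk])
      show "bounded_linear (GD f D z y)" unfolding GD_def
        by (intro bounded_linear_sub bounded_linear_compose[OF bl] Minv_props(5) bl CD_bnd[OF cd])
    qed
    show "(\<lambda>k. 0::real) \<longlonglongrightarrow> 0" by simp
    let ?a = "\<lambda>k. onorm (\<lambda>v. Dk k (xk k + z) v - D (x + z) v)"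
    let ?b = "\<lambda>k. onorm (\<lambda>v. Dk k (xk k) v - D x v)"
    show "\<forall>\<^sub>F k in sequentially. onorm (\<lambda>v. GD (fk k) (Dk k) z y v - GD f D z y v) \<le> 2 * (?a k + ?b k) + 4 * ?c * ?b k"
    proof (rule always_eventually, rule allI)
      fix k
      have h1: "onorm (\<lambda>v. GD (fk k) (Dk k) z y v - GD f D z y v) \<le>
          2 * onorm (\<lambda>v. (Dk k (xk k + z) v - Dk k (xk k) v) - (D (x + z) v - D x v)) + 4 * ?c * ?b k"
        unfolding GD_def xk_def[symmetric] x_def[symmetric]
        by (intro Gdiff blk bl CD_bnd[OF cdk] CD_bnd[OF cd])
      have h2: "onorm (\<lambda>v. (Dk k (xk k + z) v - Dk k (xk k) v) - (D (x + z) v - D x v)) \<le> ?a k + ?b k"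
      proof -
        have "onorm (\<lambda>v. (Dk k (xk k + z) v - Dk k (xk k) v) - (D (x + z) v - D x v))
           = onorm (\<lambda>v. (Dk k (xk k + z) v - D (x + z) v) - (Dk k (xk k) v - D x v))"
          by (rule arg_cong[where f=onorm]) (rule ext, simp add: algebra_simps)
        also have "\<dots> \<le> ?a k + ?b k" by (intro onorm_sub_le bounded_linear_sub blk bl)
        finally show ?thesis .
      qed
      have h3: "2 * onorm (\<lambda>v. (Dk k (xk k + z) v - Dk k (xk k) v) - (D (x + z) v - D x v)) + 4 * ?c * ?b k
          \<le> 2 * (?a k + ?b k) + 4 * ?c * ?b k" using h2 by simp
      show "onorm (\<lambda>v. GD (fk k) (Dk k) z y v - GD f D z y v) \<le> 2 * (?a k + ?b k) + 4 * ?c * ?b k"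
        by (rule order_trans[OF h1 h3])
    qed
    show "(\<lambda>k. 2 * (?a k + ?b k) + 4 * ?c * ?b k) \<longlonglongrightarrow> 0"
      by (rule tendsto_add_zero[OF tendsto_mult_right_zero[OF tendsto_add_zero[OF a0 b0]] tendsto_mult_right_zero[OF b0]])
  qed
qed

lemma sup_ev:
  fixes F :: "nat \<Rightarrow> real \<Rightarrow> 'a \<Rightarrow> real"
  assumes L: "(\<lambda>k. SUP t\<in>T. SUP x\<in>S. ereal (F k t x)) \<longlonglongrightarrow> 0" and t: "t \<in> T" and e: "0 < e"
  shows "eventually (\<lambda>k. \<forall>x\<in>S. F k t x < e) sequentially"
proof -
  have "0 < ereal e" using e by simp
  hence ev: "eventually (\<lambda>k. (SUP t\<in>T. SUP x\<in>S. ereal (F k t x)) < ereal e) sequentially"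
    using order_tendstoD(2)[OF L] by (simp add: zero_ereal_def)
  show ?thesis
  proof (rule eventually_mono[OF ev], intro ballI)
    fix k x assume a: "(SUP t\<in>T. SUP x\<in>S. ereal (F k t x)) < ereal e" and x: "x \<in> S"
    have "ereal (F k t x) \<le> (SUP t\<in>T. SUP x\<in>S. ereal (F k t x))"
      by (rule SUP_upper2[OF t SUP_upper[OF x]])
    hence "ereal (F k t x) < ereal e" using a by (rule le_less_trans)
    thus "F k t x < e" by simp
  qed
qed

lemma setting_CD:
  fixes u :: "enat \<Rightarrow> real \<Rightarrow> 'a::euclidean_space \<Rightarrow> 'a"
  assumes S: "setting \<gamma> u" and s: "s \<in> {0..1}"
  shows "CD (u n s) (grad (u n s))" "HD (grad (u n s)) \<gamma>"
proof -
  let ?D = "grad (u n s)"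
  have der: "(u n s has_derivative ?D x) (at x)" for x
    using S s unfolding setting_def grad_def by (simp add: frechet_derivative_works[symmetric])
  have bl: "bounded_linear (?D x)" for x using der has_derivative_bounded_linear by blast
  have H: "sup_op ?D + hoelder_op ?D \<gamma> \<le> ereal (1/2)"
    using S s unfolding setting_def hnorm_op_def by blast
  have s0: "0 \<le> sup_op ?D"
  proof -
    have "ereal (onorm (?D 0)) \<le> sup_op ?D" unfolding sup_op_def by (rule SUP_upper) simp
    moreover have "0 \<le> onorm (?D 0)" by (rule onorm_pos_le[OF bl])
    hence "(0::ereal) \<le> ereal (onorm (?D 0))" by simp
    ultimately show ?thesis by (rule order_trans[rotated])
  qed
  obtain b :: 'a where b: "b \<in> Basis" using nonempty_Basis by blast
  hence bne: "b \<noteq> 0" by auto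
  have h0: "0 \<le> hoelder_op ?D \<gamma>"
  proof -
    have "ereal (onorm (\<lambda>v. ?D (fst (b, 0)) v - ?D (snd (b, 0)) v) / (dist (fst (b, 0)) (snd (b, 0)) powr \<gamma>))
        \<le> hoelder_op ?D \<gamma>" unfolding hoelder_op_def by (rule SUP_upper2[where i="(b, 0)"]) (use bne in auto)
    moreover have "0 \<le> onorm (\<lambda>v. ?D (fst (b, 0)) v - ?D (snd (b, 0)) v) / (dist (fst (b, 0)) (snd (b, 0)) powr \<gamma>)"
      by (intro divide_nonneg_nonneg onorm_pos_le bounded_linear_sub bl) simp
    hence "(0::ereal) \<le> ereal (onorm (\<lambda>v. ?D (fst (b, 0)) v - ?D (snd (b, 0)) v) / (dist (fst (b, 0)) (snd (b, 0)) powr \<gamma>))" by simp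
    ultimately show ?thesis by (rule order_trans[rotated])
  qed
  have sle: "sup_op ?D \<le> ereal (1/2)"
  proof -
    have "sup_op ?D = sup_op ?D + 0" by simp
    also have "\<dots> \<le> sup_op ?D + hoelder_op ?D \<gamma>" by (rule add_left_mono[OF h0])
    finally show ?thesis using H by (rule order_trans)
  qed
  have hle: "hoelder_op ?D \<gamma> \<le> ereal (1/2)"
  proof -
    have "hoelder_op ?D \<gamma> = 0 + hoelder_op ?D \<gamma>" by simp
    also have "\<dots> \<le> sup_op ?D + hoelder_op ?D \<gamma>" by (rule add_right_mono[OF s0])
    finally show ?thesis using H by (rule order_trans)
  qed
  have bnd: "onorm (?D x) \<le> 1/2" for x
  proof -
    have "ereal (onorm (?D x)) \<le> sup_op ?D" unfolding sup_op_def by (rule SUP_upper) simp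
    hence "ereal (onorm (?D x)) \<le> ereal (1/2)" using sle by (rule order_trans)
    thus ?thesis by simp
  qed
  show "CD (u n s) ?D" unfolding CD_def using der bnd by blast
  show "HD ?D \<gamma>" unfolding HD_def
  proof (intro allI)
    fix x x' :: 'a
    show "onorm (\<lambda>v. ?D x v - ?D x' v) \<le> 1/2 * dist x x' powr \<gamma>"
    proof (cases "x = x'")
      case True thus ?thesis by (simp add: onorm_zero)
    next
      case False
      have dp: "0 < dist x x' powr \<gamma>" using False by simp
      have "ereal (onorm (\<lambda>v. ?D (fst (x, x')) v - ?D (snd (x, x')) v) / (dist (fst (x, x')) (snd (x, x')) powr \<gamma>))
        \<le> hoelder_op ?D \<gamma>" unfolding hoelder_op_def by (rule SUP_upper2[where i="(x, x')"]) (use False in auto)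
      hence "ereal (onorm (\<lambda>v. ?D x v - ?D x' v) / (dist x x' powr \<gamma>)) \<le> hoelder_op ?D \<gamma>" by simp
      hence "ereal (onorm (\<lambda>v. ?D x v - ?D x' v) / (dist x x' powr \<gamma>)) \<le> ereal (1/2)" using hle by (rule order_trans)
      hence "onorm (\<lambda>v. ?D x v - ?D x' v) / (dist x x' powr \<gamma>) \<le> 1/2" by simp
      thus ?thesis using dp by (simp add: pos_divide_le_eq)
    qed
  qed
qed

lemma setting_conv:
  fixes u :: "enat \<Rightarrow> real \<Rightarrow> 'a::euclidean_space \<Rightarrow> 'a"
  assumes S: "setting \<gamma> u" and t: "t \<in> {0..1}"
  shows "\<And>x. (\<lambda>k. u (enat k) t x) \<longlonglongrightarrow> u \<infinity> t x"
    and "\<And>R e. 0 < R \<Longrightarrow> 0 < e \<Longrightarrow>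
       eventually (\<lambda>k. \<forall>x\<in>cball 0 R. onorm (\<lambda>v. grad (u (enat k) t) x v - grad (u \<infinity> t) x v) < e) sequentially"
proof -
  fix R e :: real assume R: "0 < R" and e: "0 < e"
  have L: "(\<lambda>k::nat. SUP t\<in>{0..1}. SUP x\<in>cball 0 R.
                 ereal (onorm (\<lambda>v. grad (u (enat k) t) x v - grad (u \<infinity> t) x v))) \<longlonglongrightarrow> 0"
    using S R unfolding setting_def by blast
  show "eventually (\<lambda>k. \<forall>x\<in>cball 0 R. onorm (\<lambda>v. grad (u (enat k) t) x v - grad (u \<infinity> t) x v) < e) sequentially"
    by (rule sup_ev[OF L t e])
next
  fix x :: 'a
  show "(\<lambda>k. u (enat k) t x) \<longlonglongrightarrow> u \<infinity> t x"
  proof (unfold tendsto_iff, intro allI impI)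
    fix e :: real assume e: "0 < e"
    define R where "R = norm x + 1"
    have R: "0 < R" by (simp add: R_def add_nonneg_pos)
    have L: "(\<lambda>k::nat. SUP t\<in>{0..1}. SUP x\<in>cball 0 R.
                 ereal (norm (u (enat k) t x - u \<infinity> t x))) \<longlonglongrightarrow> 0"
      using S R unfolding setting_def by blast
    have xR: "x \<in> cball 0 R" by (simp add: R_def)
    show "\<forall>\<^sub>F k in sequentially. dist (u (enat k) t x) (u \<infinity> t x) < e"
      using sup_ev[OF L t e] by (rule eventually_mono) (use xR in \<open>auto simp: dist_norm\<close>)
  qed
qed

lemma gfun_eq: "(\<lambda>y. gfun u n s y z) = (\<lambda>y. PH (u n s) (PSI (u n s) y + z) - y)"
proof -
  have e: "Phi u n s = PH (u n s)" by (rule ext) (simp add: Phi_def PH_def)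
  show ?thesis by (rule ext) (simp add: gfun_def e PSI_def)
qed

lemma grad_gfun:
  assumes "CD (u n s) D"
  shows "grad (\<lambda>y. gfun u n s y z) = GD (u n s) D z"
proof (rule ext)
  fix y
  show "grad (\<lambda>y. gfun u n s y z) y = GD (u n s) D z y"
    unfolding grad_def gfun_eq by (rule frechet_derivative_at[OF g_der[OF assms], symmetric])
qed

theorem lemma3p2:
  fixes \<gamma> \<gamma>1 \<gamma>2 :: real
  assumes "0 < \<gamma>" "\<gamma> < 1" "\<gamma>1 \<ge> 0" "\<gamma>2 \<ge> 0" "\<gamma>1 + \<gamma>2 = \<gamma>"
  shows "(\<exists>C1>0. \<forall>u :: enat \<Rightarrow> real \<Rightarrow> 'a::euclidean_space \<Rightarrow> 'a. setting \<gamma> u \<longrightarrow>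
            (\<forall>n z. (\<forall>s\<in>{0..1}. \<forall>y. (\<lambda>y. gfun u n s y z) differentiable (at y)) \<and>
                   (SUP s\<in>{0..1}. hnorm_op (grad (\<lambda>y. gfun u n s y z)) \<gamma>1)
                      \<le> ereal (C1 * min 1 (mpow (norm z) \<gamma>2))) \<and>
            (\<forall>n s y z. s \<in> {0..1} \<longrightarrow> norm (gfun u n s y z) \<le> 3/2 * norm z))
       \<and> (\<forall>u :: enat \<Rightarrow> real \<Rightarrow> 'a \<Rightarrow> 'a. setting \<gamma> u \<longrightarrow>
            (\<forall>t\<in>{0..1}. \<forall>y z.
               (\<lambda>k::nat. gfun u (enat k) t y z) \<longlonglongrightarrow> gfun u \<infinity> t y z \<and>
               (\<lambda>k::nat. onorm (\<lambda>v. grad (\<lambda>y. gfun u (enat k) t y z) y v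
                                     - grad (\<lambda>y. gfun u \<infinity> t y z) y v)) \<longlonglongrightarrow> 0))"
  proof -
  have P1: "\<forall>u :: enat \<Rightarrow> real \<Rightarrow> 'a::euclidean_space \<Rightarrow> 'a. setting \<gamma> u \<longrightarrow>
            (\<forall>n z. (\<forall>s\<in>{0..1}. \<forall>y. (\<lambda>y. gfun u n s y z) differentiable (at y)) \<and>
                   (SUP s\<in>{0..1}. hnorm_op (grad (\<lambda>y. gfun u n s y z)) \<gamma>1)
                      \<le> ereal (18 * min 1 (mpow (norm z) \<gamma>2))) \<and>
            (\<forall>n s y z. s \<in> {0..1} \<longrightarrow> norm (gfun u n s y z) \<le> 3/2 * norm z)"
  proof (intro allI impI conjI ballI)
    fix u :: "enat \<Rightarrow> real \<Rightarrow> 'a \<Rightarrow> 'a" and n z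
    assume S: "setting \<gamma> u"
    {
      fix s :: real assume s: "s \<in> {0..1}"
      have cd: "CD (u n s) (grad (u n s))" and hd: "HD (grad (u n s)) \<gamma>" using setting_CD[OF S s] by auto
      interpret est "u n s" "grad (u n s)" \<gamma> \<gamma>1 \<gamma>2 z
        by unfold_locales (use cd hd assms in auto)
      have gd: "grad (\<lambda>y. gfun u n s y z) = GD (u n s) (grad (u n s)) z" by (rule grad_gfun[where u=u and n=n and s=s and D="grad (u n s)" and z=z, OF cd])
      have "(\<lambda>y. gfun u n s y z) differentiable (at y)" for y
        unfolding gfun_eq using g_der[OF cd] by (rule differentiableI)
      moreover have "hnorm_op (grad (\<lambda>y. gfun u n s y z)) \<gamma>1 \<le> ereal (18 * m)"
      proof -
        have a: "sup_op (GD (u n s) (grad (u n s)) z) \<le> ereal (2 * m)"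
          unfolding sup_op_def by (rule SUP_least) (simp add: E1)
        have b: "hoelder_op (GD (u n s) (grad (u n s)) z) \<gamma>1 \<le> ereal (16 * m)"
          unfolding hoelder_op_def
        proof (rule SUP_least)
          fix p :: "'a \<times> 'a" assume "p \<in> {p. fst p \<noteq> snd p}"
          hence ne: "fst p \<noteq> snd p" by simp
          have dp: "0 < dist (fst p) (snd p) powr \<gamma>1" using ne by simp
          have "onorm (\<lambda>v. GD (u n s) (grad (u n s)) z (fst p) v - GD (u n s) (grad (u n s)) z (snd p) v)
              / dist (fst p) (snd p) powr \<gamma>1 \<le> 16 * m"
            using E2[OF ne] dp by (simp add: pos_divide_le_eq)
          thus "ereal (onorm (\<lambda>v. GD (u n s) (grad (u n s)) z (fst p) v - GD (u n s) (grad (u n s)) z (snd p) v)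
              / dist (fst p) (snd p) powr \<gamma>1) \<le> ereal (16 * m)" by simp
        qed
        have "hnorm_op (GD (u n s) (grad (u n s)) z) \<gamma>1 \<le> ereal (2 * m) + ereal (16 * m)"
          unfolding hnorm_op_def by (rule add_mono[OF a b])
        thus ?thesis unfolding gd by simp
      qed
      moreover have "norm (gfun u n s y z) \<le> 3/2 * norm z" for y
      proof -
        let ?x = "PSI (u n s) y"
        have "gfun u n s y z = PH (u n s) (?x + z) - y" using fun_cong[OF gfun_eq[where u=u and n=n and s=s and z=z], of y] by simp
        also have "PH (u n s) (?x + z) - y = PH (u n s) (?x + z) - PH (u n s) ?x" by (simp add: PH_PSI[OF cd])
        also have "PH (u n s) (?x + z) - PH (u n s) ?x = z + (u n s (?x + z) - u n s ?x)"
          by (simp add: PH_def algebra_simps)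
        finally have "gfun u n s y z = z + (u n s (?x + z) - u n s ?x)" .
        hence "norm (gfun u n s y z) \<le> norm z + norm (u n s (?x + z) - u n s ?x)"
          by (simp add: norm_triangle_ineq)
        moreover have "norm (u n s (?x + z) - u n s ?x) \<le> 1/2 * norm ((?x + z) - ?x)" by (rule CD_lip[OF cd])
        ultimately show ?thesis by simp
      qed
      ultimately have "(\<forall>y. (\<lambda>y. gfun u n s y z) differentiable (at y))"
        "hnorm_op (grad (\<lambda>y. gfun u n s y z)) \<gamma>1 \<le> ereal (18 * min 1 (mpow (norm z) \<gamma>2))"
        "\<forall>y. norm (gfun u n s y z) \<le> 3/2 * norm z" by auto
    } note R = this
    fix s :: real and y assume s: "s \<in> {0..1}"
    show "(\<lambda>y. gfun u n s y z) differentiable (at y)" using R(1)[OF s] by blast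
  next
    fix u :: "enat \<Rightarrow> real \<Rightarrow> 'a \<Rightarrow> 'a" and n z
    assume S: "setting \<gamma> u"
    show "(SUP s\<in>{0..1}. hnorm_op (grad (\<lambda>y. gfun u n s y z)) \<gamma>1) \<le> ereal (18 * min 1 (mpow (norm z) \<gamma>2))"
    proof (rule SUP_least)
      fix s :: real assume s: "s \<in> {0..1}"
      have cd: "CD (u n s) (grad (u n s))" and hd: "HD (grad (u n s)) \<gamma>" using setting_CD[OF S s] by auto
      interpret est "u n s" "grad (u n s)" \<gamma> \<gamma>1 \<gamma>2 z
        by unfold_locales (use cd hd assms in auto)
      have gd: "grad (\<lambda>y. gfun u n s y z) = GD (u n s) (grad (u n s)) z" by (rule grad_gfun[where u=u and n=n and s=s and D="grad (u n s)" and z=z, OF cd])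
      have a: "sup_op (GD (u n s) (grad (u n s)) z) \<le> ereal (2 * m)"
        unfolding sup_op_def by (rule SUP_least) (simp add: E1)
      have b: "hoelder_op (GD (u n s) (grad (u n s)) z) \<gamma>1 \<le> ereal (16 * m)"
        unfolding hoelder_op_def
      proof (rule SUP_least)
        fix p :: "'a \<times> 'a" assume "p \<in> {p. fst p \<noteq> snd p}"
        hence ne: "fst p \<noteq> snd p" by simp
        have dp: "0 < dist (fst p) (snd p) powr \<gamma>1" using ne by simp
        have "onorm (\<lambda>v. GD (u n s) (grad (u n s)) z (fst p) v - GD (u n s) (grad (u n s)) z (snd p) v)
            / dist (fst p) (snd p) powr \<gamma>1 \<le> 16 * m"
          using E2[OF ne] dp by (simp add: pos_divide_le_eq)
        thus "ereal (onorm (\<lambda>v. GD (u n s) (grad (u n s)) z (fst p) v - GD (u n s) (grad (u n s)) z (snd p) v)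
            / dist (fst p) (snd p) powr \<gamma>1) \<le> ereal (16 * m)" by simp
      qed
      have "hnorm_op (GD (u n s) (grad (u n s)) z) \<gamma>1 \<le> ereal (2 * m) + ereal (16 * m)"
        unfolding hnorm_op_def by (rule add_mono[OF a b])
      thus "hnorm_op (grad (\<lambda>y. gfun u n s y z)) \<gamma>1 \<le> ereal (18 * min 1 (mpow (norm z) \<gamma>2))"
        unfolding gd by simp
    qed
  next
    fix u :: "enat \<Rightarrow> real \<Rightarrow> 'a \<Rightarrow> 'a" and n and s :: real and y z
    assume S: "setting \<gamma> u" and s: "s \<in> {0..1}"
    have cd: "CD (u n s) (grad (u n s))" using setting_CD[OF S s] by auto
    let ?x = "PSI (u n s) y"
    have "gfun u n s y z = PH (u n s) (?x + z) - y" using fun_cong[OF gfun_eq[where u=u and n=n and s=s and z=z], of y] by simp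
    also have "PH (u n s) (?x + z) - y = PH (u n s) (?x + z) - PH (u n s) ?x" by (simp add: PH_PSI[OF cd])
    also have "PH (u n s) (?x + z) - PH (u n s) ?x = z + (u n s (?x + z) - u n s ?x)"
      by (simp add: PH_def algebra_simps)
    finally have "gfun u n s y z = z + (u n s (?x + z) - u n s ?x)" .
    hence "norm (gfun u n s y z) \<le> norm z + norm (u n s (?x + z) - u n s ?x)"
      by (simp add: norm_triangle_ineq)
    moreover have "norm (u n s (?x + z) - u n s ?x) \<le> 1/2 * norm ((?x + z) - ?x)" by (rule CD_lip[OF cd])
    ultimately show "norm (gfun u n s y z) \<le> 3/2 * norm z" by simp
  qed
  have P2: "\<forall>u :: enat \<Rightarrow> real \<Rightarrow> 'a \<Rightarrow> 'a. setting \<gamma> u \<longrightarrow>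
            (\<forall>t\<in>{0..1}. \<forall>y z.
               (\<lambda>k::nat. gfun u (enat k) t y z) \<longlonglongrightarrow> gfun u \<infinity> t y z \<and>
               (\<lambda>k::nat. onorm (\<lambda>v. grad (\<lambda>y. gfun u (enat k) t y z) y v
                                     - grad (\<lambda>y. gfun u \<infinity> t y z) y v)) \<longlonglongrightarrow> 0)"
  proof (intro allI impI ballI conjI)
    fix u :: "enat \<Rightarrow> real \<Rightarrow> 'a \<Rightarrow> 'a" and t :: real and y z
    assume S: "setting \<gamma> u" and t: "t \<in> {0..1}"
    have cdk: "\<And>k. CD (u (enat k) t) (grad (u (enat k) t))" using setting_CD[OF S t] by auto
    have cd: "CD (u \<infinity> t) (grad (u \<infinity> t))" and hd: "HD (grad (u \<infinity> t)) \<gamma>" using setting_CD[OF S t] by auto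
    note C = conv_aux[where fk="\<lambda>k. u (enat k) t" and Dk="\<lambda>k. grad (u (enat k) t)" and f="u \<infinity> t" and D="grad (u \<infinity> t)" and \<gamma>=\<gamma> and y=y and z=z,
        OF cdk cd hd assms(1) setting_conv(1)[OF S t] setting_conv(2)[OF S t]]
    show "(\<lambda>k::nat. gfun u (enat k) t y z) \<longlonglongrightarrow> gfun u \<infinity> t y z"
      using C(1) by (simp add: gfun_eq[THEN fun_cong, simplified])
    show "(\<lambda>k::nat. onorm (\<lambda>v. grad (\<lambda>y. gfun u (enat k) t y z) y v
                                     - grad (\<lambda>y. gfun u \<infinity> t y z) y v)) \<longlonglongrightarrow> 0"
    proof -
      have gk: "grad (\<lambda>y. gfun u (enat k) t y z) = GD (u (enat k) t) (grad (u (enat k) t)) z" for k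
        by (rule grad_gfun[where u=u and n="enat k" and s=t and D="grad (u (enat k) t)" and z=z, OF cdk])
      have gi: "grad (\<lambda>y. gfun u \<infinity> t y z) = GD (u \<infinity> t) (grad (u \<infinity> t)) z"
        by (rule grad_gfun[where u=u and n="\<infinity>" and s=t and D="grad (u \<infinity> t)" and z=z, OF cd])
      show ?thesis unfolding gk gi using C(2) by simp
    qed
  qed
  show ?thesis
  proof (rule conjI[OF _ P2], rule exI[of _ 18], rule conjI)
    show "(0::real) < 18" by simp
  qed (rule P1)
qed


end
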